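(* Let $(X,d,\kappa)$ be a complete digital metric space, and assume either that $X$ is finite or that $d$ is an $\ell_p$ metric for some $1\le p\le\infty$. Let $T:X\to X$ be a bijective generalized $\alpha$-$\psi$-expansive mapping (with associated $\alpha:X\times X\to[0,\infty)$ and $\psi\in\Psi$) such that (1) $T^{-1}$ is $\alpha$-admissible, and (2) there exists $x_0\in X$ such that $\alpha(x_0,T^{-1}(x_0))\ge 1$. Then $T$ has a fixed point.
   Context: A digital metric space is a triple $(X,d,\kappa)$ where $X\subset\mathbb{Z}^n$ for some positive integer $n$, $\kappa$ is an adjacency relation on $X$, and $d$ is a metric on $X$. The $\ell_p$ metric on $\mathbb{Z}^n$ is $d(x,y)=(\sum_i|x_i-y_i|^p)^{1/p}$ for $1\le p<\infty$ and $\max_i|x_i-y_i|$ for $p=\infty$. $\Psi$ is the set of nondecreasing functions $\psi:[0,\infty)\to[0,\infty)$ with $\sum_{n=1}^\infty\psi^n(t)<\infty$ for all $t>0$ ($\psi^n$ the $n$-fold composition). A map $R:X\to X$ is $\alpha$-admissible (for $\alpha:X\times X\to[0,\infty)$) if $\alpha(x,y)\ge1$ implies $\alpha(R(x),R(y))\ge1$. $T$ is a generalized $\alpha$-$\psi$-expansive mapping if there exist $\alpha:X\times X\to[0,\infty)$ and $\psi\in\Psi$ such that for all $x,y\in X$, $\psi(d(T(x),T(y)))\ge\alpha(x,y)M(x,y)$, where $M(x,y)=\max\{d(x,y),\ \tfrac{d(x,T(x))+d(y,T(y))}{2},\ \tfrac{d(x,T(y))+d(y,T(x))}{2}\}$.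 *)

theory Defs
  imports "HOL-Analysis.Analysis"
begin

text \<open>Points of \<open>\<int>\<^sup>n\<close> are vectors \<open>int ^ 'n\<close>; the dimension n = CARD('n) \<ge> 1.\<close>

definition is_metric_on :: "'a set \<Rightarrow> ('a \<Rightarrow> 'a \<Rightarrow> real) \<Rightarrow> bool" where
  "is_metric_on X d \<longleftrightarrow>
     (\<forall>x\<in>X. \<forall>y\<in>X. d x y \<ge> 0) \<and>
     (\<forall>x\<in>X. \<forall>y\<in>X. d x y = 0 \<longleftrightarrow> x = y) \<and>
     (\<forall>x\<in>X. \<forall>y\<in>X. d x y = d y x) \<and>
     (\<forall>x\<in>X. \<forall>y\<in>X. \<forall>z\<in>X. d x z \<le> d x y + d y z)"

definition is_adjacency_on :: "'a set \<Rightarrow> ('a \<Rightarrow> 'a \<Rightarrow> bool) \<Rightarrow> bool" where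
  "is_adjacency_on X \<kappa> \<longleftrightarrow>
     (\<forall>x\<in>X. \<not> \<kappa> x x) \<and> (\<forall>x\<in>X. \<forall>y\<in>X. \<kappa> x y \<longrightarrow> \<kappa> y x)"

definition digital_metric_space ::
  "(int ^ 'n) set \<Rightarrow> (int ^ 'n \<Rightarrow> int ^ 'n \<Rightarrow> real) \<Rightarrow> (int ^ 'n \<Rightarrow> int ^ 'n \<Rightarrow> bool) \<Rightarrow> bool" where
  "digital_metric_space X d \<kappa> \<longleftrightarrow> is_metric_on X d \<and> is_adjacency_on X \<kappa>"

definition d_Cauchy :: "'a set \<Rightarrow> ('a \<Rightarrow> 'a \<Rightarrow> real) \<Rightarrow> (nat \<Rightarrow> 'a) \<Rightarrow> bool" where
  "d_Cauchy X d s \<longleftrightarrow> (\<forall>e>0. \<exists>N. \<forall>m\<ge>N. \<forall>n\<ge>N. d (s m) (s n) < e)"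

definition d_complete :: "'a set \<Rightarrow> ('a \<Rightarrow> 'a \<Rightarrow> real) \<Rightarrow> bool" where
  "d_complete X d \<longleftrightarrow>
     (\<forall>s. (\<forall>k. s k \<in> X) \<and> d_Cauchy X d s \<longrightarrow> (\<exists>L\<in>X. (\<lambda>k. d (s k) L) \<longlonglongrightarrow> 0))"

definition lp_dist :: "real \<Rightarrow> int ^ 'n \<Rightarrow> int ^ 'n \<Rightarrow> real" where
  "lp_dist p x y = (\<Sum>i\<in>UNIV. \<bar>real_of_int (x $ i - y $ i)\<bar> powr p) powr (1 / p)"

definition linf_dist :: "int ^ 'n \<Rightarrow> int ^ 'n \<Rightarrow> real" where
  "linf_dist x y = Max ((\<lambda>i. \<bar>real_of_int (x $ i - y $ i)\<bar>) ` UNIV)"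

definition is_lp_metric_on :: "(int ^ 'n) set \<Rightarrow> (int ^ 'n \<Rightarrow> int ^ 'n \<Rightarrow> real) \<Rightarrow> bool" where
  "is_lp_metric_on X d \<longleftrightarrow>
     (\<exists>p\<ge>1. \<forall>x\<in>X. \<forall>y\<in>X. d x y = lp_dist p x y) \<or> (\<forall>x\<in>X. \<forall>y\<in>X. d x y = linf_dist x y)"

definition Psi_class :: "(real \<Rightarrow> real) \<Rightarrow> bool" where
  "Psi_class \<psi> \<longleftrightarrow>
     (\<forall>t\<ge>0. \<psi> t \<ge> 0) \<and>
     (\<forall>s t. 0 \<le> s \<and> s \<le> t \<longrightarrow> \<psi> s \<le> \<psi> t) \<and>
     (\<forall>t>0. summable (\<lambda>n. (\<psi> ^^ Suc n) t))"

definition alpha_admissible :: "'a set \<Rightarrow> ('a \<Rightarrow> 'a \<Rightarrow> real) \<Rightarrow> ('a \<Rightarrow> 'a) \<Rightarrow> bool" where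
  "alpha_admissible X \<alpha> R \<longleftrightarrow>
     (\<forall>x\<in>X. \<forall>y\<in>X. \<alpha> x y \<ge> 1 \<longrightarrow> \<alpha> (R x) (R y) \<ge> 1)"

definition M_fun :: "('a \<Rightarrow> 'a \<Rightarrow> real) \<Rightarrow> ('a \<Rightarrow> 'a) \<Rightarrow> 'a \<Rightarrow> 'a \<Rightarrow> real" where
  "M_fun d T x y = max (d x y) (max ((d x (T x) + d y (T y)) / 2) ((d x (T y) + d y (T x)) / 2))"

definition gen_alpha_psi_expansive ::
  "'a set \<Rightarrow> ('a \<Rightarrow> 'a \<Rightarrow> real) \<Rightarrow> ('a \<Rightarrow> 'a) \<Rightarrow> ('a \<Rightarrow> 'a \<Rightarrow> real) \<Rightarrow> (real \<Rightarrow> real) \<Rightarrow> bool" where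
  "gen_alpha_psi_expansive X d T \<alpha> \<psi> \<longleftrightarrow>
     (\<forall>x\<in>X. \<forall>y\<in>X. \<alpha> x y \<ge> 0) \<and> Psi_class \<psi> \<and>
     (\<forall>x\<in>X. \<forall>y\<in>X. \<psi> (d (T x) (T y)) \<ge> \<alpha> x y * M_fun d T x y)"

end

theory Submission
  imports Defs
begin

lemma lp_ge1:
  fixes x y :: "int ^ 'n"
  assumes "p \<ge> 1" "x \<noteq> y"
  shows "lp_dist p x y \<ge> 1"
proof -
  obtain i where i: "x $ i \<noteq> y $ i" using assms(2) by (metis vec_eq_iff)
  have a: "\<bar>real_of_int (x $ i - y $ i)\<bar> \<ge> 1" proof -
    have "\<bar>x $ i - y $ i\<bar> \<ge> (1::int)" using i by linarith
    then show ?thesis by (metis of_int_abs of_int_le_iff of_int_1)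
  qed
  have "1 \<le> \<bar>real_of_int (x $ i - y $ i)\<bar> powr p"
    using a assms(1) by (metis ge_one_powr_ge_zero order_trans zero_le_one)
  also have "\<dots> \<le> (\<Sum>j\<in>UNIV. \<bar>real_of_int (x $ j - y $ j)\<bar> powr p)"
    by (rule member_le_sum) auto
  finally have s: "1 \<le> (\<Sum>j\<in>UNIV. \<bar>real_of_int (x $ j - y $ j)\<bar> powr p)" .
  have "1 \<le> (\<Sum>j\<in>UNIV. \<bar>real_of_int (x $ j - y $ j)\<bar> powr p) powr (1/p)"
    using s assms(1) by (intro ge_one_powr_ge_zero) auto
  then show ?thesis by (simp add: lp_dist_def)
qed

lemma linf_ge1:
  fixes x y :: "int ^ 'n"
  assumes "x \<noteq> y"
  shows "linf_dist x y \<ge> 1"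
proof -
  obtain i where i: "x $ i \<noteq> y $ i" using assms by (metis vec_eq_iff)
  have a: "\<bar>real_of_int (x $ i - y $ i)\<bar> \<ge> 1" proof -
    have "\<bar>x $ i - y $ i\<bar> \<ge> (1::int)" using i by linarith
    then show ?thesis by (metis of_int_abs of_int_le_iff of_int_1)
  qed
  also have "\<dots> \<le> linf_dist x y" unfolding linf_dist_def
    by (rule Max_ge) auto
  finally show ?thesis .
qed

lemma sep:
  fixes X :: "(int ^ 'n) set"
  assumes "finite X \<or> is_lp_metric_on X d" "is_metric_on X d"
  shows "\<exists>\<delta>>0. \<forall>x\<in>X. \<forall>y\<in>X. x \<noteq> y \<longrightarrow> d x y \<ge> \<delta>"
  using assms(1)
proof
  assume f: "finite X"
  let ?D = "(\<lambda>(x,y). d x y) ` {(x,y). x \<in> X \<and> y \<in> X \<and> x \<noteq> y}"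
  have fin: "finite ?D" using f by (intro finite_imageI) (auto intro: finite_subset[of _ "X \<times> X"])
  show ?thesis
  proof (cases "?D = {}")
    case True then show ?thesis by (intro exI[of _ 1]) auto
  next
    case False
    have pos: "\<forall>t\<in>?D. t > 0" using assms(2) unfolding is_metric_on_def
      by (auto simp: order_le_less)
    have "Min ?D > 0" using fin False pos by auto
    moreover have "\<forall>x\<in>X. \<forall>y\<in>X. x \<noteq> y \<longrightarrow> d x y \<ge> Min ?D"
      using fin by (auto intro!: Min_le)
    ultimately show ?thesis by blast
  qed
next
  assume "is_lp_metric_on X d"
  then have "\<forall>x\<in>X. \<forall>y\<in>X. x \<noteq> y \<longrightarrow> d x y \<ge> 1"
    unfolding is_lp_metric_on_def using lp_ge1 linf_ge1 by metis
  then show ?thesis by (intro exI[of _ 1]) auto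
qed

theorem theorem4p9:
  fixes X :: "(int ^ 'n) set"
    and d :: "int ^ 'n \<Rightarrow> int ^ 'n \<Rightarrow> real"
    and \<kappa> :: "int ^ 'n \<Rightarrow> int ^ 'n \<Rightarrow> bool"
    and T :: "int ^ 'n \<Rightarrow> int ^ 'n"
    and \<alpha> :: "int ^ 'n \<Rightarrow> int ^ 'n \<Rightarrow> real"
    and \<psi> :: "real \<Rightarrow> real"
  assumes "digital_metric_space X d \<kappa>"
    and "d_complete X d"
    and "finite X \<or> is_lp_metric_on X d"
    and "bij_betw T X X"
    and "gen_alpha_psi_expansive X d T \<alpha> \<psi>"
    and "alpha_admissible X \<alpha> (inv_into X T)"
    and "\<exists>x0\<in>X. \<alpha> x0 (inv_into X T x0) \<ge> 1"
  shows "\<exists>x\<in>X. T x = x"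
proof -
  define S where "S = inv_into X T"
  have met: "is_metric_on X d" using assms(1) by (simp add: digital_metric_space_def)
  have TX: "T ` X = X" using assms(4) by (simp add: bij_betw_def)
  have SX: "\<And>x. x \<in> X \<Longrightarrow> S x \<in> X" unfolding S_def by (metis TX inv_into_into)
  have TS: "\<And>x. x \<in> X \<Longrightarrow> T (S x) = x" unfolding S_def by (metis TX f_inv_into_f)
  obtain x0 where x0: "x0 \<in> X" "\<alpha> x0 (S x0) \<ge> 1" using assms(7) S_def by auto
  define x where "x n = (S ^^ n) x0" for n
  have xX: "x n \<in> X" for n by (induction n) (auto simp: x_def x0 SX)
  have xS: "x (Suc n) = S (x n)" for n by (simp add: x_def)
  have al: "\<alpha> (x n) (x (Suc n)) \<ge> 1" for n
  proof (induction n)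
    case 0 then show ?case using x0 by (simp add: x_def)
  next
    case (Suc n) then show ?case using assms(6) xX unfolding alpha_admissible_def S_def[symmetric]
      by (metis xS)
  qed
  have psi: "Psi_class \<psi>" using assms(5) by (simp add: gen_alpha_psi_expansive_def)
  have dnn: "d a b \<ge> 0" if "a \<in> X" "b \<in> X" for a b using met that by (simp add: is_metric_on_def)
  define a where "a n = d (x n) (x (Suc n))" for n
  have ann: "a n \<ge> 0" for n using dnn xX by (simp add: a_def)
  have step: "a (Suc n) \<le> \<psi> (a n)" for n
  proof -
    have e: "\<psi> (d (T (x (Suc n))) (T (x (Suc (Suc n))))) \<ge> \<alpha> (x (Suc n)) (x (Suc (Suc n))) * M_fun d T (x (Suc n)) (x (Suc (Suc n)))"
      using assms(5) xX unfolding gen_alpha_psi_expansive_def by blast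
    have T1: "T (x (Suc n)) = x n" using TS xS xX by metis
    have T2: "T (x (Suc (Suc n))) = x (Suc n)" using TS xS xX by metis
    have M: "M_fun d T (x (Suc n)) (x (Suc (Suc n))) \<ge> a (Suc n)"
      unfolding M_fun_def a_def by simp
    have "a (Suc n) \<le> \<alpha> (x (Suc n)) (x (Suc (Suc n))) * M_fun d T (x (Suc n)) (x (Suc (Suc n)))"
      using M al[of "Suc n"] ann[of "Suc n"]
      by (metis dual_order.trans mult_le_cancel_right1 order.strict_trans1 not_le mult_right_mono zero_le_one)
    then show ?thesis using e T1 T2 by (simp add: a_def)
  qed
  have bound: "a n \<le> (\<psi> ^^ n) (a 0)" for n
  proof (induction n)
    case 0 then show ?case by simp
  next
    case (Suc n)
    have "a (Suc n) \<le> \<psi> (a n)" by (rule step)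
    also have "\<dots> \<le> \<psi> ((\<psi> ^^ n) (a 0))" using psi Suc ann[of n] unfolding Psi_class_def by blast
    finally show ?case by simp
  qed
  obtain \<delta> where \<delta>: "\<delta> > 0" "\<forall>u\<in>X. \<forall>v\<in>X. u \<noteq> v \<longrightarrow> d u v \<ge> \<delta>"
    using sep[OF assms(3) met] by blast
  show ?thesis
  proof (cases "a 0 = 0")
    case True
    then have "x 0 = x (Suc 0)" using met xX unfolding a_def is_metric_on_def by blast
    then have "T (x 0) = x 0" using TS xS xX by metis
    then show ?thesis using xX by blast
  next
    case False
    then have "a 0 > 0" using ann[of 0] by simp
    then have "summable (\<lambda>n. (\<psi> ^^ Suc n) (a 0))" using psi unfolding Psi_class_def by blast
    then have "(\<lambda>n. (\<psi> ^^ Suc n) (a 0)) \<longlonglongrightarrow> 0" by (rule summable_LIMSEQ_zero)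
    then obtain N where "\<forall>n\<ge>N. norm ((\<psi> ^^ Suc n) (a 0) - 0) < \<delta>"
      using \<delta>(1) LIMSEQ_iff by metis
    then have "(\<psi> ^^ Suc N) (a 0) < \<delta>" by (metis order_refl abs_less_iff diff_zero real_norm_def)
    then have "a (Suc N) < \<delta>" using bound[of "Suc N"] by simp
    then have "x (Suc N) = x (Suc (Suc N))" using \<delta>(2) xX unfolding a_def by force
    then have "T (x (Suc (Suc N))) = x (Suc (Suc N))" using TS xS xX by metis
    then show ?thesis using xX by blast
  qed
qed

end
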